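(* Let $S=(0,1)$. Let $\{\lambda_n\}_{n\geq 1}$ be i.i.d. random variables, each uniformly distributed on $(3.87,4)$, and let $X_0$ be an $S$-valued random variable independent of the $\lambda_n$'s. Define the Markov process $X_{n+1}=\lambda_{n+1}X_n(1-X_n)$ for $n\geq 0$. Let $A_0=\left(1-\frac{1}{3.87},\,\frac34\right)$ and let $\phi$ be normalized Lebesgue measure on $A_0$, i.e. $\phi(B)=\mathrm{Leb}(B\cap A_0)/\mathrm{Leb}(A_0)$. Then $\{X_n\}_{n\geq 0}$ is $\phi$-irreducible: for every $x\in S$ and every Borel set $B\subset S$ with $\phi(B)>0$, there is $n\geq 1$ such that $p^n(x,B)=\mathrm{Prob}(X_n\in B\mid X_0=x)>0$.
   Context: $p^n(x,B)$ denotes the $n$-step transition probability $\mathrm{Prob}(X_n\in B\mid X_0=x)$ of the Markov chain. *)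

theory Defs
  imports "HOL-Probability.Probability"
begin

definition lam_dist :: "real measure" where
  "lam_dist = uniform_measure lborel {3.87<..<4}"

definition logistic :: "real \<Rightarrow> real \<Rightarrow> real" where
  "logistic l y = l * y * (1 - y)"

text \<open>Trajectory: X_0 = x, X_(k+1) = lambda_(k+1) X_k (1 - X_k), where lambda_(k+1) is
  stored as component k of the parameter vector lam.\<close>
fun traj :: "real \<Rightarrow> (nat \<Rightarrow> real) \<Rightarrow> nat \<Rightarrow> real" where
  "traj x lam 0 = x"
| "traj x lam (Suc k) = logistic (lam k) (traj x lam k)"

definition trans_prob :: "nat \<Rightarrow> real \<Rightarrow> real set \<Rightarrow> real" where
  "trans_prob n x B =
     measure (PiM {..<n} (\<lambda>_. lam_dist))
       {lam \<in> space (PiM {..<n} (\<lambda>_. lam_dist)). traj x lam n \<in> B}"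

definition A0 :: "real set" where
  "A0 = {1 - 1/3.87 <..< 3/4}"

definition phi :: "real set \<Rightarrow> real" where
  "phi B = measure lborel (B \<inter> A0) / measure lborel A0"

end

theory Submission
  imports Defs
begin

definition reach :: "real \<Rightarrow> bool" where
  "reach y \<longleftrightarrow> (\<exists>m lam. (\<forall>j<m. lam j \<in> {3.87<..<4}) \<and> traj y lam m \<in> A0)"

definition Qon :: "real \<Rightarrow> real \<Rightarrow> bool" where
  "Qon p q \<longleftrightarrow> (\<forall>y. 0 < y \<and> y < 1 \<and> p < y*(1-y) \<and> y*(1-y) < q \<longrightarrow> reach y)"

definition RI :: "real \<Rightarrow> real \<Rightarrow> bool" where
  "RI c d \<longleftrightarrow> (\<forall>t. c < t \<and> t < d \<longrightarrow> reach t)"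

lemma traj_shift: "traj x (case_nat l lam) (Suc k) = traj (logistic l x) lam k"
  by (induction k) auto

lemma reach_back:
  assumes "reach (logistic l y)" "3.87 < l" "l < 4"
  shows "reach y"
proof -
  obtain m lam where "\<forall>j<m. lam j \<in> {3.87<..<4}" "traj (logistic l y) lam m \<in> A0"
    using assms(1) unfolding reach_def by blast
  then show ?thesis unfolding reach_def using assms(2,3)
    apply (intro exI[of _ "Suc m"] exI[of _ "case_nat l lam"])
    apply (simp only: traj_shift)
    apply (auto simp: less_Suc_eq_0_disj)
    done
qed

lemma RI_base: "RI (287/387) (3/4)"
  unfolding RI_def reach_def A0_def
  by (intro allI impI exI[of _ 0]) auto

lemma Qon_of_RI:
  assumes "RI c d" "0 < c" "c < d"
  shows "Qon (c/4) (d/3.87)"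
  unfolding Qon_def
proof (intro allI impI)
  fix y :: real assume y: "0 < y \<and> y < 1 \<and> c/4 < y*(1-y) \<and> y*(1-y) < d/3.87"
  define u where "u = y*(1-y)"
  have u: "0 < u" "c < 4*u" "3.87*u < d" using y assms by (auto simp: u_def field_simps)
  define t where "t = (max c (3.87*u) + min d (4*u))/2"
  have t: "c < t" "t < d" "3.87*u < t" "t < 4*u" using u assms by (auto simp: t_def)
  have "reach t" using assms(1) t unfolding RI_def by auto
  moreover have "logistic (t/u) y = t/u * u" by (simp add: logistic_def u_def)
  then have "logistic (t/u) y = t" using u by simp
  ultimately have "reach (logistic (t/u) y)" by simp
  moreover have "3.87 < t/u" "t/u < 4" using t u by (auto simp: field_simps)
  ultimately show "reach y" using reach_back by blast
qed

lemma g_mono: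
  fixes c t :: real
  assumes "c < t" "t + c < 1"
  shows "c*(1-c) < t*(1-t)"
proof -
  have "t*(1-t) - c*(1-c) = (t-c)*(1-t-c)" by algebra
  moreover have "(t-c)*(1-t-c) > 0" using assms by simp
  ultimately show ?thesis by simp
qed

lemma RI_low:
  assumes "Qon p q" "p \<le> c*(1-c)" "d*(1-d) \<le> q" "0 \<le> c" "d \<le> 1/2"
  shows "RI c d"
  unfolding RI_def
proof (intro allI impI)
  fix t :: real assume t: "c < t \<and> t < d"
  have "c*(1-c) < t*(1-t)" using t assms by (intro g_mono) auto
  moreover have "t*(1-t) < d*(1-d)" using t assms by (intro g_mono) auto
  ultimately show "reach t" using assms t unfolding Qon_def by auto
qed

lemma RI_high:
  assumes "Qon p q" "p \<le> c*(1-c)" "d*(1-d) \<le> q" "0 \<le> c" "d \<le> 1/2"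
  shows "RI (1-d) (1-c)"
  unfolding RI_def
proof (intro allI impI)
  fix t :: real assume t: "1-d < t \<and> t < 1-c"
  have "c*(1-c) < (1-t)*(1-(1-t))" using t assms by (intro g_mono) auto
  moreover have "(1-t)*(1-(1-t)) < d*(1-d)" using t assms by (intro g_mono) auto
  ultimately show "reach t" using assms t unfolding Qon_def by (auto simp: algebra_simps)
qed

lemma low:
  assumes "Qon p q" "p \<le> c*(1-c)" "d*(1-d) \<le> q" "0 < c" "c < d" "d \<le> 1/2"
  shows "Qon (c/4) (d/3.87)"
  using RI_low[OF assms(1-3)] assms(4-6) by (intro Qon_of_RI) auto

lemma high:
  assumes "Qon p q" "p \<le> c*(1-c)" "d*(1-d) \<le> q" "0 < c" "c < d" "d \<le> 1/2"
  shows "Qon ((1-d)/4) ((1-c)/3.87)"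
  using RI_high[OF assms(1-3)] assms(4-6) by (intro Qon_of_RI) auto

lemma union:
  assumes "Qon p1 q1" "Qon p2 q2" "p2 < q1"
  shows "Qon p1 q2"
  using assms unfolding Qon_def by force

lemma base: "Qon ((287/387)/4) ((3/4)/3.87)"
  by (rule Qon_of_RI[OF RI_base]) auto

lemma n0: "Qon ((287/387)/4) ((3/4)/3.87)" by (rule base)

lemma n1: "Qon (0.24584/4) (0.26293/3.87)" by (rule low[OF n0]) simp_all

lemma n4: "Qon ((1-0.07331)/4) ((1-0.06579)/3.87)" by (rule high[OF n1]) simp_all

lemma n13: "Qon (0.36463/4) (0.40725/3.87)" by (rule low[OF n4]) simp_all

lemma n22: "Qon ((1-0.11951)/4) ((1-0.10145)/3.87)" by (rule high[OF n13]) simp_all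

lemma n2: "Qon ((1-0.26293)/4) ((1-0.24584)/3.87)" by (rule high[OF n0]) simp_all

lemma n6: "Qon ((1-0.2652)/4) ((1-0.24362)/3.87)" by (rule high[OF n2]) simp_all

lemma n11: "Qon (0.24252/4) (0.26643/3.87)" by (rule low[OF n6]) simp_all

lemma n20: "Qon ((1-0.07437)/4) ((1-0.06484)/3.87)" by (rule high[OF n11]) simp_all

lemma u53: "Qon ((1-0.11951)/4) ((1-0.06484)/3.87)"
proof -
  have "Qon ((1-0.11951)/4) ((1-0.06484)/3.87)" by (rule union[OF n22 n20]) simp
  then show ?thesis .
qed

lemma n53: "Qon (0.32715/4) (0.40858/3.87)" by (rule low[OF u53]) simp_all

lemma n67: "Qon (0.08987/4) (0.11996/3.87)" by (rule low[OF n53]) simp_all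

lemma n3: "Qon (0.06579/4) (0.07331/3.87)" by (rule low[OF n1]) simp_all

lemma n8: "Qon ((1-0.01931)/4) ((1-0.01673)/3.87)" by (rule high[OF n3]) simp_all

lemma n29: "Qon (0.43052/4) (0.5/3.87)" by (rule low[OF n8]) simp_all

lemma n30: "Qon ((1-0.5)/4) ((1-0.43052)/3.87)" by (rule high[OF n8]) simp_all

lemma u45: "Qon (0.43052/4) ((1-0.43052)/3.87)"
proof -
  have "Qon (0.43052/4) ((1-0.43052)/3.87)" by (rule union[OF n29 n30]) simp
  then show ?thesis .
qed

lemma n45: "Qon (0.12269/4) (0.1793/3.87)" by (rule low[OF u45]) simp_all

lemma u54: "Qon ((1-0.11951)/4) ((1-0.06484)/3.87)"
proof -
  have "Qon ((1-0.11951)/4) ((1-0.06484)/3.87)" by (rule union[OF n22 n20]) simp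
  then show ?thesis .
qed

lemma n54: "Qon ((1-0.40858)/4) ((1-0.32715)/3.87)" by (rule high[OF u54]) simp_all

lemma n68: "Qon (0.1804/4) (0.22407/3.87)" by (rule low[OF n54]) simp_all

lemma n14: "Qon ((1-0.40725)/4) ((1-0.36463)/3.87)" by (rule high[OF n4]) simp_all

lemma n24: "Qon ((1-0.20704)/4) ((1-0.18092)/3.87)" by (rule high[OF n14]) simp_all

lemma n52: "Qon ((1-0.30416)/4) ((1-0.2725)/3.87)" by (rule high[OF n24]) simp_all

lemma n12: "Qon ((1-0.26643)/4) ((1-0.24252)/3.87)" by (rule high[OF n6]) simp_all

lemma n26: "Qon ((1-0.26704)/4) ((1-0.24192)/3.87)" by (rule high[OF n12]) simp_all

lemma n50: "Qon ((1-0.26737)/4) ((1-0.24163)/3.87)" by (rule high[OF n26]) simp_all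

lemma u70: "Qon ((1-0.30416)/4) ((1-0.24163)/3.87)"
proof -
  have "Qon ((1-0.30416)/4) ((1-0.24163)/3.87)" by (rule union[OF n52 n50]) simp
  then show ?thesis .
qed

lemma n70: "Qon (0.22425/4) (0.26753/3.87)" by (rule low[OF u70]) simp_all

lemma n5: "Qon (0.24362/4) (0.2652/3.87)" by (rule low[OF n2]) simp_all

lemma n10: "Qon ((1-0.074)/4) ((1-0.06515)/3.87)" by (rule high[OF n5]) simp_all

lemma n28: "Qon ((1-0.40814)/4) ((1-0.36399)/3.87)" by (rule high[OF n10]) simp_all

lemma n48: "Qon ((1-0.20732)/4) ((1-0.18058)/3.87)" by (rule high[OF n28]) simp_all

lemma u46: "Qon (0.43052/4) ((1-0.43052)/3.87)"
proof -
  have "Qon (0.43052/4) ((1-0.43052)/3.87)" by (rule union[OF n29 n30]) simp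
  then show ?thesis .
qed

lemma n46: "Qon ((1-0.1793)/4) ((1-0.12269)/3.87)" by (rule high[OF u46]) simp_all

lemma n27: "Qon (0.36399/4) (0.40814/3.87)" by (rule low[OF n10]) simp_all

lemma n44: "Qon ((1-0.11981)/4) ((1-0.10125)/3.87)" by (rule high[OF n27]) simp_all

lemma n25: "Qon (0.24192/4) (0.26704/3.87)" by (rule low[OF n12]) simp_all

lemma n42: "Qon ((1-0.07456)/4) ((1-0.06467)/3.87)" by (rule high[OF n25]) simp_all

lemma n23: "Qon (0.18092/4) (0.20704/3.87)" by (rule low[OF n14]) simp_all

lemma n40: "Qon ((1-0.05671)/4) ((1-0.04749)/3.87)" by (rule high[OF n23]) simp_all

lemma u72: "Qon ((1-0.20732)/4) ((1-0.01673)/3.87)"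
proof -
  have "Qon ((1-0.20732)/4) ((1-0.12269)/3.87)" by (rule union[OF n48 n46]) simp
  then have "Qon ((1-0.20732)/4) ((1-0.10125)/3.87)" by (rule union[OF _ n44]) simp
  then have "Qon ((1-0.20732)/4) ((1-0.06467)/3.87)" by (rule union[OF _ n42]) simp
  then have "Qon ((1-0.20732)/4) ((1-0.04749)/3.87)" by (rule union[OF _ n40]) simp
  then have "Qon ((1-0.20732)/4) ((1-0.01673)/3.87)" by (rule union[OF _ n8]) simp
  then show ?thesis .
qed

lemma n72: "Qon (0.27234/4) (0.5/3.87)" by (rule low[OF u72]) simp_all

lemma u73: "Qon ((1-0.20732)/4) ((1-0.01673)/3.87)"
proof -
  have "Qon ((1-0.20732)/4) ((1-0.12269)/3.87)" by (rule union[OF n48 n46]) simp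
  then have "Qon ((1-0.20732)/4) ((1-0.10125)/3.87)" by (rule union[OF _ n44]) simp
  then have "Qon ((1-0.20732)/4) ((1-0.06467)/3.87)" by (rule union[OF _ n42]) simp
  then have "Qon ((1-0.20732)/4) ((1-0.04749)/3.87)" by (rule union[OF _ n40]) simp
  then have "Qon ((1-0.20732)/4) ((1-0.01673)/3.87)" by (rule union[OF _ n8]) simp
  then show ?thesis .
qed

lemma n73: "Qon ((1-0.5)/4) ((1-0.27234)/3.87)" by (rule high[OF u73]) simp_all

lemma u71: "Qon ((1-0.30416)/4) ((1-0.24163)/3.87)"
proof -
  have "Qon ((1-0.30416)/4) ((1-0.24163)/3.87)" by (rule union[OF n52 n50]) simp
  then show ?thesis .
qed

lemma n71: "Qon ((1-0.26753)/4) ((1-0.22425)/3.87)" by (rule high[OF u71]) simp_all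

lemma n69: "Qon ((1-0.22407)/4) ((1-0.1804)/3.87)" by (rule high[OF n54]) simp_all

lemma topchain: "Qon (0.08987/4) ((1-0.01673)/3.87)"
proof -
  have "Qon (0.08987/4) (0.1793/3.87)" by (rule union[OF n67 n45]) simp
  then have "Qon (0.08987/4) (0.22407/3.87)" by (rule union[OF _ n68]) simp
  then have "Qon (0.08987/4) (0.26753/3.87)" by (rule union[OF _ n70]) simp
  then have "Qon (0.08987/4) (0.5/3.87)" by (rule union[OF _ n72]) simp
  then have "Qon (0.08987/4) ((1-0.27234)/3.87)" by (rule union[OF _ n73]) simp
  then have "Qon (0.08987/4) ((1-0.22425)/3.87)" by (rule union[OF _ n71]) simp
  then have "Qon (0.08987/4) ((1-0.1804)/3.87)" by (rule union[OF _ n69]) simp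
  then have "Qon (0.08987/4) ((1-0.12269)/3.87)" by (rule union[OF _ n46]) simp
  then have "Qon (0.08987/4) ((1-0.10125)/3.87)" by (rule union[OF _ n44]) simp
  then have "Qon (0.08987/4) ((1-0.06467)/3.87)" by (rule union[OF _ n42]) simp
  then have "Qon (0.08987/4) ((1-0.04749)/3.87)" by (rule union[OF _ n40]) simp
  then have "Qon (0.08987/4) ((1-0.01673)/3.87)" by (rule union[OF _ n8]) simp
  then show ?thesis .
qed

lemma Qtop: "Qon (0.08987/4) ((1-0.01673)/3.87)" "(0.08987/4) < (0.03::real)" "((1-0.01673)/3.87) > (1/4::real)" using topchain by simp_all


lemma reach_big:
  assumes "0 < y" "y < 1" "0.03 \<le> y*(1-y)"
  shows "reach y"
proof -
  have "y*(1-y) = 1/4 - (y-1/2)^2" by (simp add: power2_eq_square algebra_simps)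
  then have "y*(1-y) \<le> 1/4" by simp
  then show ?thesis using Qtop assms unfolding Qon_def by auto
qed

lemma reach_ind: "\<forall>y. 0 < y \<and> y < 1 \<and> 0.03/3^n \<le> y*(1-y) \<longrightarrow> reach y"
proof (induction n)
  case 0
  then show ?case using reach_big by auto
next
  case (Suc n)
  show ?case
  proof (intro allI impI)
    fix y :: real assume y: "0 < y \<and> y < 1 \<and> 0.03/3^Suc n \<le> y*(1-y)"
    show "reach y"
    proof (cases "0.03/3^n \<le> y*(1-y)")
      case True then show ?thesis using Suc y by auto
    next
      case False
      define g where "g = y*(1-y)"
      have g0: "0 < g" using y by (simp add: g_def)
      have "(3::real)^n \<ge> 1" by simp
      then have "0.03/3^n \<le> (0.03::real)" by (simp add: divide_le_eq)
      then have g1: "g \<le> 0.03" using False by (simp add: g_def)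
      define z where "z = 3.9 * g"
      have z: "0 < z" "z \<le> 0.117" using g0 g1 by (auto simp: z_def)
      have "z * 0.883 \<le> z*(1-z)" using z by (intro mult_left_mono) auto
      then have "3 * g \<le> z*(1-z)" using g0 by (simp add: z_def)
      moreover have "3 * (0.03/3^Suc n) = (0.03/3^n::real)" by simp
      ultimately have "0.03/3^n \<le> z*(1-z)" using y g_def by linarith
      then have "reach z" using Suc z by auto
      moreover have "logistic 3.9 y = z" by (simp add: logistic_def z_def g_def)
      ultimately show ?thesis using reach_back[of "3.9" y] by simp
    qed
  qed
qed

lemma reach_all:
  assumes "0 < y" "y < 1"
  shows "reach y"
proof -
  have g: "0 < y*(1-y)" using assms by simp
  obtain n where "(1/3::real)^n < y*(1-y)/0.03"
    using real_arch_pow_inv[of "y*(1-y)/0.03" "1/3"] g by auto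
  then have "0.03/3^n \<le> y*(1-y)" by (simp add: power_divide field_simps)
  then show ?thesis using reach_ind assms by auto
qed


lemma sets_lam_dist[simp, measurable_cong]: "sets lam_dist = sets borel"
  by (simp add: lam_dist_def)

lemma space_lam_dist[simp]: "space lam_dist = UNIV"
  by (simp add: lam_dist_def)

lemma prob_lam_dist: "prob_space lam_dist"
  unfolding lam_dist_def by (rule prob_space_uniform_measure) auto

lemma emeasure_lam_dist:
  assumes "A \<in> sets borel"
  shows "emeasure lam_dist A = emeasure lborel ({3.87<..<4} \<inter> A) / ennreal 0.13"
  using assms unfolding lam_dist_def by (subst emeasure_uniform_measure) auto

lemma traj_meas:
  "k \<le> n \<Longrightarrow> (\<lambda>lam. traj x lam k) \<in> borel_measurable (PiM {..<n} (\<lambda>_. lam_dist))"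
proof (induction k)
  case 0
  then show ?case by simp
next
  case (Suc k)
  have c: "(\<lambda>lam. lam k) \<in> measurable (PiM {..<n} (\<lambda>_. lam_dist)) lam_dist"
    using Suc.prems by (intro measurable_component_singleton) auto
  have c': "(\<lambda>lam. lam k) \<in> borel_measurable (PiM {..<n} (\<lambda>_. lam_dist))"
    using c by (simp add: measurable_cong_sets[OF refl sets_lam_dist, symmetric])
  have t: "(\<lambda>lam. traj x lam k) \<in> borel_measurable (PiM {..<n} (\<lambda>_. lam_dist))"
    using Suc by simp
  show ?case unfolding traj.simps logistic_def
    using c' t by measurable
qed

lemma traj_01:
  assumes "0 < x" "x < 1" "\<forall>j<k. lam j \<in> {3.87<..<4}"
  shows "0 < traj x lam k \<and> traj x lam k < 1"
  using assms(3)
proof (induction k)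
  case 0
  then show ?case using assms by simp
next
  case (Suc k)
  define u where "u = traj x lam k"
  have u: "0 < u" "u < 1" using Suc unfolding u_def by auto
  have a: "3.87 < lam k" "lam k < 4" using Suc.prems by auto
  have "u*(1-u) = 1/4 - (u-1/2)^2" by (simp add: power2_eq_square algebra_simps)
  then have g1: "u*(1-u) \<le> 1/4" by simp
  have g2: "0 < u*(1-u)" using u by simp
  note g = g1 g2
  have "lam k * (u*(1-u)) < 4 * (u*(1-u))"
    using g a by (intro mult_strict_right_mono) auto
  then have "lam k * (u*(1-u)) < 1" using g1 by linarith
  moreover have "0 < lam k * (u*(1-u))" using g a by simp
  ultimately show ?case by (simp add: logistic_def u_def[symmetric] mult.assoc)
qed

lemma traj_cont:
  assumes x: "0 < x" "x < 1"
  shows "(\<forall>j<k. lam0 j \<in> {3.87<..<4}) \<Longrightarrow> 0 < e \<Longrightarrow> \<exists>d>0. \<forall>lam. (\<forall>j<k. lam j \<in> {3.87<..<4} \<and> \<bar>lam j - lam0 j\<bar> < d) \<longrightarrow> \<bar>traj x lam k - traj x lam0 k\<bar> < e"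
proof (induction k arbitrary: e)
  case 0
  then show ?case by (intro exI[of _ 1]) auto
next
  case (Suc k)
  have "\<forall>j<k. lam0 j \<in> {3.87<..<4}" using Suc.prems by auto
  moreover have "0 < e/8" using Suc.prems by simp
  ultimately obtain d1 where d1: "d1 > 0" "\<forall>lam. (\<forall>j<k. lam j \<in> {3.87<..<4} \<and> \<bar>lam j - lam0 j\<bar> < d1) \<longrightarrow> \<bar>traj x lam k - traj x lam0 k\<bar> < e/8"
    using Suc.IH by blast
  show ?case
  proof (intro exI[of _ "min d1 (e/2)"] conjI allI impI)
    show "0 < min d1 (e/2)" using d1 Suc.prems by simp
    fix lam assume H: "\<forall>j<Suc k. lam j \<in> {3.87<..<4} \<and> \<bar>lam j - lam0 j\<bar> < min d1 (e/2)"
    define u where "u = traj x lam k"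
    define u0 where "u0 = traj x lam0 k"
    define a where "a = lam k"
    define a0 where "a0 = lam0 k"
    have uu: "\<bar>u - u0\<bar> < e/8" using d1 H unfolding u_def u0_def by auto
    have aa: "\<bar>a - a0\<bar> < e/2" using H unfolding a_def a0_def by auto
    have u: "0 < u" "u < 1" using traj_01[OF x, of k lam] H unfolding u_def by auto
    have u0: "0 < u0" "u0 < 1" using traj_01[OF x, of k lam0] Suc.prems unfolding u0_def by auto
    have a0: "0 < a0" "a0 < 4" using Suc.prems unfolding a0_def by auto
    have eq: "a*u*(1-u) - a0*u0*(1-u0) = (a-a0)*(u*(1-u)) + a0*((u-u0)*(1-u-u0))"
      by (simp add: algebra_simps)
    have g: "0 \<le> u*(1-u)" "u*(1-u) \<le> 1" using u by (auto intro: mult_le_one)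
    have t1: "\<bar>(a-a0)*(u*(1-u))\<bar> \<le> \<bar>a-a0\<bar>"
      using g by (simp add: abs_mult mult_left_le)
    have s: "\<bar>1-u-u0\<bar> \<le> 1" using u u0 by simp
    have "\<bar>(u-u0)*(1-u-u0)\<bar> \<le> \<bar>u-u0\<bar>"
      using s by (simp add: abs_mult mult_left_le)
    then have t2: "\<bar>a0*((u-u0)*(1-u-u0))\<bar> \<le> 4 * \<bar>u-u0\<bar>"
    proof -
      have "\<bar>a0*((u-u0)*(1-u-u0))\<bar> = a0*\<bar>(u-u0)*(1-u-u0)\<bar>" using a0 by (simp add: abs_mult)
      also have "\<dots> \<le> 4 * \<bar>u-u0\<bar>" using a0 \<open>\<bar>(u-u0)*(1-u-u0)\<bar> \<le> \<bar>u-u0\<bar>\<close> by (intro mult_mono) auto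
      finally show ?thesis .
    qed
    have "\<bar>a*u*(1-u) - a0*u0*(1-u0)\<bar> < e"
    proof -
      have "\<bar>(a-a0)*(u*(1-u)) + a0*((u-u0)*(1-u-u0))\<bar> \<le> \<bar>(a-a0)*(u*(1-u))\<bar> + \<bar>a0*((u-u0)*(1-u-u0))\<bar>"
        by (rule abs_triangle_ineq)
      then show ?thesis unfolding eq using t1 t2 uu aa by linarith
    qed
    then show "\<bar>traj x lam (Suc k) - traj x lam0 (Suc k)\<bar> < e"
      by (simp add: logistic_def u_def u0_def a_def a0_def)
  qed
qed


interpretation LP: product_sigma_finite "\<lambda>_::nat. lam_dist"
  unfolding product_sigma_finite_def
  using prob_lam_dist prob_space_imp_sigma_finite by blast

lemma S_meas:
  assumes "A \<in> sets borel" "k \<le> n"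
  shows "{lam \<in> space (PiM {..<n} (\<lambda>_. lam_dist)). traj x lam k \<in> A} \<in> sets (PiM {..<n} (\<lambda>_. lam_dist))"
proof -
  have "(\<lambda>lam. traj x lam k) -` A \<inter> space (PiM {..<n} (\<lambda>_. lam_dist)) \<in> sets (PiM {..<n} (\<lambda>_. lam_dist))"
    by (rule measurable_sets[OF traj_meas[OF assms(2)] assms(1)])
  moreover have "(\<lambda>lam. traj x lam k) -` A \<inter> space (PiM {..<n} (\<lambda>_. lam_dist)) = {lam \<in> space (PiM {..<n} (\<lambda>_. lam_dist)). traj x lam k \<in> A}"
    by auto
  ultimately show ?thesis by simp
qed

lemma S_pos:
  assumes x: "0 < x" "x < 1"
    and l0: "\<forall>j<m. lam0 j \<in> {3.87<..<4}" and t0: "traj x lam0 m \<in> A0"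
  shows "0 < emeasure (PiM {..<m} (\<lambda>_. lam_dist)) {lam \<in> space (PiM {..<m} (\<lambda>_. lam_dist)). traj x lam m \<in> A0}"
proof -
  define t where "t = traj x lam0 m"
  define e where "e = min (t - (1 - 1/3.87)) (3/4 - t)"
  have e: "0 < e" using t0 unfolding e_def t_def A0_def by auto
  obtain d where d: "d > 0" "\<forall>lam. (\<forall>j<m. lam j \<in> {3.87<..<4} \<and> \<bar>lam j - lam0 j\<bar> < d) \<longrightarrow> \<bar>traj x lam m - traj x lam0 m\<bar> < e"
    using traj_cont[OF x l0 e] by blast
  define Bj where "Bj j = {max 3.87 (lam0 j - d) <..< min 4 (lam0 j + d)}" for j
  have sub: "PiE {..<m} Bj \<subseteq> {lam \<in> space (PiM {..<m} (\<lambda>_. lam_dist)). traj x lam m \<in> A0}"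
  proof
    fix lam assume lam: "lam \<in> PiE {..<m} Bj"
    have "\<forall>j<m. lam j \<in> {3.87<..<4} \<and> \<bar>lam j - lam0 j\<bar> < d"
      using lam unfolding Bj_def by (force simp: PiE_iff abs_less_iff)
    then have "\<bar>traj x lam m - t\<bar> < e" using d unfolding t_def by blast
    then have "traj x lam m \<in> A0" unfolding A0_def e_def by auto
    moreover have "lam \<in> space (PiM {..<m} (\<lambda>_. lam_dist))"
      using lam by (auto simp: space_PiM PiE_iff)
    ultimately show "lam \<in> {lam \<in> space (PiM {..<m} (\<lambda>_. lam_dist)). traj x lam m \<in> A0}" by simp
  qed
  have Bpos: "emeasure lam_dist (Bj j) = ennreal ((min 4 (lam0 j + d) - max 3.87 (lam0 j - d)) / 0.13)"
    and Bp: "0 < (min 4 (lam0 j + d) - max 3.87 (lam0 j - d)) / 0.13" if "j < m" for j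
  proof -
    have lj: "3.87 < lam0 j" "lam0 j < 4" using l0 that by auto
    have "{3.87<..<4} \<inter> Bj j = Bj j" unfolding Bj_def by auto
    then have "emeasure lam_dist (Bj j) = emeasure lborel (Bj j) / ennreal 0.13"
      by (simp add: emeasure_lam_dist Bj_def)
    also have "\<dots> = ennreal (min 4 (lam0 j + d) - max 3.87 (lam0 j - d)) / ennreal 0.13"
      using lj d by (simp add: Bj_def)
    also have "\<dots> = ennreal ((min 4 (lam0 j + d) - max 3.87 (lam0 j - d)) / 0.13)"
      using lj d by (intro divide_ennreal) auto
    finally show "emeasure lam_dist (Bj j) = ennreal ((min 4 (lam0 j + d) - max 3.87 (lam0 j - d)) / 0.13)" .
    show "0 < (min 4 (lam0 j + d) - max 3.87 (lam0 j - d)) / 0.13" using lj d by auto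
  qed
  have "emeasure (PiM {..<m} (\<lambda>_. lam_dist)) (PiE {..<m} Bj) = (\<Prod>j<m. emeasure lam_dist (Bj j))"
    by (rule LP.emeasure_PiM) (auto simp: Bj_def)
  also have "\<dots> = (\<Prod>j<m. ennreal ((min 4 (lam0 j + d) - max 3.87 (lam0 j - d)) / 0.13))"
    using Bpos by (intro prod.cong) auto
  also have "\<dots> = ennreal (\<Prod>j<m. (min 4 (lam0 j + d) - max 3.87 (lam0 j - d)) / 0.13)"
    using Bp by (intro prod_ennreal) (auto intro: less_imp_le)
  finally have eq: "emeasure (PiM {..<m} (\<lambda>_. lam_dist)) (PiE {..<m} Bj) = ennreal (\<Prod>j<m. (min 4 (lam0 j + d) - max 3.87 (lam0 j - d)) / 0.13)" .
  have "0 < (\<Prod>j<m. (min 4 (lam0 j + d) - max 3.87 (lam0 j - d)) / 0.13)"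
    using Bp by (intro prod_pos) auto
  then have "0 < emeasure (PiM {..<m} (\<lambda>_. lam_dist)) (PiE {..<m} Bj)" unfolding eq by simp
  also have "\<dots> \<le> emeasure (PiM {..<m} (\<lambda>_. lam_dist)) {lam \<in> space (PiM {..<m} (\<lambda>_. lam_dist)). traj x lam m \<in> A0}"
    using sub S_meas[of A0 m m x]
    by (intro emeasure_mono) (auto simp: A0_def)
  finally show ?thesis .
qed


lemma traj_upd: "k \<le> m \<Longrightarrow> traj x (lam(m:=y)) k = traj x lam k"
  by (induction k) auto

lemma scale_lborel:
  assumes "A \<in> sets borel" "(G::real) > 0"
  shows "emeasure lborel ((*) G -` A) = ennreal (inverse G) * emeasure lborel A"
proof -
  have "emeasure (distr lborel borel ((*) G)) A = emeasure lborel ((*) G -` A \<inter> space lborel)"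
    using assms by (intro emeasure_distr) auto
  moreover have "emeasure (distr lborel borel ((*) G)) A = emeasure (density lborel (\<lambda>_. ennreal (inverse \<bar>G\<bar>))) A"
    using lborel_distr_mult[of G] assms by simp
  moreover have "\<dots> = (\<integral>\<^sup>+ x. ennreal (inverse \<bar>G\<bar>) * indicator A x \<partial>lborel)"
    using assms by (intro emeasure_density) auto
  moreover have "\<dots> = ennreal (inverse G) * emeasure lborel A"
    using assms by (subst nn_integral_cmult_indicator) auto
  ultimately show ?thesis by simp
qed

lemma inner_bound:
  assumes B: "B \<in> sets borel" and z: "z \<in> A0"
  shows "ennreal (4 * measure lborel (B \<inter> A0)) / ennreal 0.13 \<le> emeasure lam_dist {y. logistic y z \<in> B}"
proof -
  define G where "G = z*(1-z)"
  have z1: "287/387 < z" "z < 3/4" using z by (auto simp: A0_def)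
  have G1: "3/16 < G"
  proof -
    have "G - 3/16 = (3/4 - z)*(z - 1/4)" unfolding G_def by (simp add: field_simps)
    moreover have "(3/4 - z)*(z - 1/4) > 0" using z1 by simp
    ultimately show ?thesis by simp
  qed
  have G2: "G < (287/387)*(1-287/387)"
  proof -
    have "(287/387)*(1-287/387) - G = (z - 287/387)*(z - (1 - 287/387))" unfolding G_def by (simp add: field_simps)
    moreover have "(z - 287/387)*(z - (1 - 287/387)) > 0" using z1 by simp
    ultimately show ?thesis by simp
  qed
  have Gpos: "G > 0" using G1 by simp
  have C: "{y. logistic y z \<in> B} = (*) G -` B" by (auto simp: logistic_def G_def mult.commute mult.left_commute)
  have BA: "B \<inter> A0 \<in> sets borel" using B by (auto simp: A0_def)
  have "((*) G :: real \<Rightarrow> real) \<in> borel_measurable borel" by measurable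
  from measurable_sets[OF this B] have Cm: "(*) G -` B \<in> sets borel" by simp
  have sub: "(*) G -` (B \<inter> A0) \<subseteq> {3.87<..<4} \<inter> (*) G -` B"
  proof
    fix y assume "y \<in> (*) G -` (B \<inter> A0)"
    then have y: "G*y \<in> B" "287/387 < G*y" "G*y < 3/4" by (auto simp: A0_def)
    have "G*3.87 < 287/387" using G2 by simp
    then have "G*3.87 < G*y" using y by simp
    then have "3.87 < y" using Gpos by simp
    moreover have "y < 4"
    proof -
      have "G*y < G*4" using y G1 by linarith
      then show "y < 4" using Gpos by simp
    qed
    ultimately show "y \<in> {3.87<..<4} \<inter> (*) G -` B" using y by auto
  qed
  have fin: "emeasure lborel (B \<inter> A0) = ennreal (measure lborel (B \<inter> A0))"
  proof (rule emeasure_eq_ennreal_measure)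
    have "emeasure lborel (B \<inter> A0) \<le> emeasure lborel A0" by (intro emeasure_mono) (auto simp: A0_def)
    also have "\<dots> < \<infinity>" by (simp add: A0_def)
    finally show "emeasure lborel (B \<inter> A0) \<noteq> \<top>" by simp
  qed
  have "ennreal (4 * measure lborel (B \<inter> A0)) = ennreal 4 * emeasure lborel (B \<inter> A0)"
    using fin by (simp add: ennreal_mult)
  also have "\<dots> \<le> ennreal (inverse G) * emeasure lborel (B \<inter> A0)"
  proof (rule mult_right_mono)
    have "4 \<le> inverse G" using G2 Gpos by (simp add: field_simps)
    then show "ennreal 4 \<le> ennreal (inverse G)" by (rule ennreal_leI)
  qed simp
  also have "\<dots> = emeasure lborel ((*) G -` (B \<inter> A0))"
    using scale_lborel[OF BA Gpos] by simp
  also have "\<dots> \<le> emeasure lborel ({3.87<..<4} \<inter> (*) G -` B)"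
    using sub Cm by (intro emeasure_mono) auto
  finally have "ennreal (4 * measure lborel (B \<inter> A0)) / ennreal 0.13 \<le> emeasure lborel ({3.87<..<4} \<inter> (*) G -` B) / ennreal 0.13"
    by (simp add: divide_ennreal_def mult_right_mono)
  also have "\<dots> = emeasure lam_dist {y. logistic y z \<in> B}"
    unfolding C using Cm by (simp add: emeasure_lam_dist)
  finally show ?thesis .
qed


theorem mainTheorem3:
  fixes x :: real and B :: "real set"
  assumes "x \<in> {0<..<1}"
    and "B \<in> sets borel" and "B \<subseteq> {0<..<1}"
    and "phi B > 0"
  shows "\<exists>n\<ge>1. trans_prob n x B > 0"
proof -
  have x: "0 < x" "x < 1" using assms(1) by auto
  obtain m lam0 where l0: "\<forall>j<m. lam0 j \<in> {3.87<..<4}" and t0: "traj x lam0 m \<in> A0"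
    using reach_all[OF x] unfolding reach_def by blast
  define M where "M = PiM {..<m} (\<lambda>_. lam_dist)"
  define P where "P = PiM (insert m {..<m}) (\<lambda>_. lam_dist)"
  have PS: "PiM {..<Suc m} (\<lambda>_. lam_dist) = P" unfolding P_def by (simp add: lessThan_Suc)
  define T where "T = {lam \<in> space P. traj x lam (Suc m) \<in> B}"
  define S where "S = {lam \<in> space M. traj x lam m \<in> A0}"
  have Tm: "T \<in> sets P" unfolding T_def PS[symmetric] by (rule S_meas[OF assms(2)]) simp
  have Sm: "S \<in> sets M" unfolding S_def M_def by (rule S_meas) (auto simp: A0_def)
  have Spos: "0 < emeasure M S" unfolding S_def M_def by (rule S_pos[OF x l0 t0])
  have mA0: "0 < measure lborel (B \<inter> A0)"
  proof (rule ccontr)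
    assume "\<not> 0 < measure lborel (B \<inter> A0)"
    then have "measure lborel (B \<inter> A0) = 0" using measure_nonneg[of lborel "B \<inter> A0"] by linarith
    then show False using assms(4) by (simp add: phi_def)
  qed
  define c0 where "c0 = ennreal (4 * measure lborel (B \<inter> A0)) / ennreal 0.13"
  have c0: "c0 \<noteq> 0" using mA0 by (simp add: c0_def)
  have "emeasure P T = (\<integral>\<^sup>+ lam. indicator T lam \<partial>P)"
    using Tm by simp
  also have "\<dots> = (\<integral>\<^sup>+ lam. (\<integral>\<^sup>+ y. indicator T (lam(m := y)) \<partial>lam_dist) \<partial>M)"
    unfolding P_def M_def
    by (rule LP.product_nn_integral_insert) (use Tm in \<open>auto simp: P_def\<close>)
  also have "\<dots> \<ge> (\<integral>\<^sup>+ lam. c0 * indicator S lam \<partial>M)"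
  proof (rule nn_integral_mono)
    fix lam assume lam: "lam \<in> space M"
    show "c0 * indicator S lam \<le> (\<integral>\<^sup>+ y. indicator T (lam(m := y)) \<partial>lam_dist)"
    proof (cases "lam \<in> S")
      case False then show ?thesis by simp
    next
      case True
      define z where "z = traj x lam m"
      have z: "z \<in> A0" using True unfolding S_def z_def by auto
      have "\<And>y. indicator T (lam(m := y)) = (indicator {y. logistic y z \<in> B} y :: ennreal)"
      proof -
        fix y
        have "lam(m := y) \<in> space P" using lam unfolding M_def P_def by (auto simp: space_PiM PiE_iff extensional_def)
        moreover have "traj x (lam(m := y)) (Suc m) = logistic y z"
          by (simp add: traj_upd z_def)
        ultimately show "indicator T (lam(m := y)) = (indicator {y. logistic y z \<in> B} y :: ennreal)"
          unfolding T_def by (simp add: indicator_def)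
      qed
      then have "(\<integral>\<^sup>+ y. indicator T (lam(m := y)) \<partial>lam_dist) = (\<integral>\<^sup>+ y. indicator {y. logistic y z \<in> B} y \<partial>lam_dist)"
        by simp
      also have "\<dots> = emeasure lam_dist {y. logistic y z \<in> B}"
      proof (rule nn_integral_indicator)
        have "((\<lambda>y. logistic y z) :: real \<Rightarrow> real) \<in> borel_measurable borel" unfolding logistic_def by measurable
        from measurable_sets[OF this assms(2)] show "{y. logistic y z \<in> B} \<in> sets lam_dist" by (simp add: vimage_def)
      qed
      finally show ?thesis using inner_bound[OF assms(2) z] True by (simp add: c0_def)
    qed
  qed
  moreover have "(\<integral>\<^sup>+ lam. c0 * indicator S lam \<partial>M) = c0 * emeasure M S"
    using Sm by (rule nn_integral_cmult_indicator)
  moreover have "0 < c0 * emeasure M S" using c0 Spos by (simp add: zero_less_iff_neq_zero)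
  ultimately have Tpos: "0 < emeasure P T" by (metis order_less_le_trans)
  interpret PP: prob_space P unfolding P_def by (intro prob_space_PiM prob_lam_dist)
  have "0 < PP.prob T" using Tpos PP.emeasure_eq_measure by simp
  then have "0 < trans_prob (Suc m) x B" unfolding trans_prob_def PS T_def by simp
  then show ?thesis by (intro exI[of _ "Suc m"]) auto
qed

end
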